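(* Assume $\sigma_1(x)=\tfrac12\sigma_1''(0)\,x(x-a_1)$ with $\sigma_1''(0)\ne0$ and real $a_1>0$, and $\frac{\tau'(0)}{\frac12\sigma_1''(0)}=-\frac{1}{1-q^{-1}}$, so that $\sigma_2(x)=\sigma_2'(0)x$ with $\sigma_2'(0)=q\big[(1-q^{-1})\tau(0)-\tfrac12\sigma_1''(0)a_1\big]\ne0$. Let $y_0=q^{-1}\Big[1-\frac{(1-q^{-1})}{a_1}\frac{\tau(0)}{\frac12\sigma_1''(0)}\Big]$ and assume $0<qy_0<1$. Put $b=a_1$ and $$\rho(x)=|x|^{\alpha}(qx/b;q)_\infty,\qquad q^{\alpha}=-\frac{q^{-2}\sigma_2'(0)}{\tfrac12\sigma_1''(0)b}.$$ Then there exist polynomials $P_n$, $n\in\mathbb{N}_0$, with $P_n$ of degree $n$ a solution of the q-EHT with $\lambda=\lambda_n$, and nonzero constants $d_n^2$, such that for all $m,n\in\mathbb{N}_0$ $$\int_0^{b}P_n(x)P_m(x)\rho(x)\,d_qx=d_n^2\delta_{mn},$$ i.e. orthogonality with respect to $\rho$ supported on $\{q^kb\}_{k\in\mathbb{N}_0}$.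
   Context: Throughout $0<q<1$. For a function $y$ and $\zeta\in\{q,q^{-1}\}$, $D_\zeta y(x)=\frac{y(x)-y(\zeta x)}{(1-\zeta)x}$ for $x\ne0$ and $D_\zeta y(0)=y'(0)$; $[n]_q=\frac{1-q^n}{1-q}$. Let $\sigma_1$ be a real polynomial of degree at most two, $\tau(x)=\tau'(0)x+\tau(0)$ a real polynomial with $\tau'(0)\ne0$, and $\sigma_2(x):=q[\sigma_1(x)+(1-q^{-1})x\tau(x)]$. The q-EHT with parameter $n$ is $\sigma_1(x)D_{q^{-1}}D_qy(x)+\tau(x)D_qy(x)+\lambda_ny(x)=0$, $\lambda_n=-[n]_q\big(\tau'(0)+\tfrac12[n-1]_{q^{-1}}\sigma_1''(0)\big)$. $(\beta;q)_\infty=\prod_{k\ge0}(1-\beta q^k)$. For $q^\alpha=c$ ($c\ne0$), $\alpha$ is any complex number with $e^{\alpha\ln q}=c$ and $|x|^\alpha:=e^{\alpha\ln|x|}$. For $b>0$, $\int_0^b f(x)\,d_qx=(1-q)b\sum_{j\ge0}q^jf(q^jb)$. *)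

theory Defs
  imports "HOL-Analysis.Analysis" "HOL-Computational_Algebra.Polynomial"
begin

definition qD :: "real \<Rightarrow> (real \<Rightarrow> real) \<Rightarrow> real \<Rightarrow> real" where
  "qD \<zeta> y x = (if x = 0 then deriv y 0 else (y x - y (\<zeta> * x)) / ((1 - \<zeta>) * x))"

definition qnum :: "real \<Rightarrow> int \<Rightarrow> real" where
  "qnum q n = (1 - q powi n) / (1 - q)"

definition qpoch_inf :: "real \<Rightarrow> real \<Rightarrow> real" where
  "qpoch_inf \<beta> q = (\<Prod>k. 1 - \<beta> * q ^ k)"

definition qEHT :: "real \<Rightarrow> (real \<Rightarrow> real) \<Rightarrow> (real \<Rightarrow> real) \<Rightarrow> real \<Rightarrow> (real \<Rightarrow> real) \<Rightarrow> bool" where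
  "qEHT q \<sigma>1 \<tau> lam y \<longleftrightarrow>
     (\<forall>x. \<sigma>1 x * qD (inverse q) (qD q y) x + \<tau> x * qD q y x + lam * y x = 0)"

text \<open>Jackson q-integral over [0,b] converging (as a series) to I:
  (1-q) b \<Sum>_j q^j f(q^j b) = I.\<close>
definition has_qint :: "real \<Rightarrow> (real \<Rightarrow> complex) \<Rightarrow> real \<Rightarrow> complex \<Rightarrow> bool" where
  "has_qint q f b I \<longleftrightarrow>
     (\<lambda>j. complex_of_real ((1 - q) * b * q ^ j) * f (q ^ j * b)) sums I"

end

theory Submission
  imports Defs
begin


definition qn :: "real \<Rightarrow> nat \<Rightarrow> real" where "qn z k = (1 - z^k)/(1-z)"

lift_definition qd :: "real \<Rightarrow> real poly \<Rightarrow> real poly" is "\<lambda>z p k. coeff p (Suc k) * qn z (Suc k)"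
proof -
  fix z :: real and p :: "real poly"
  have "\<forall>\<^sub>\<infinity> k. coeff p (Suc k) = 0" using MOST_coeff_eq_0[of p] by (rule MOST_SucI)
  then show "\<forall>\<^sub>\<infinity> k. coeff p (Suc k) * qn z (Suc k) = 0" by (rule MOST_rev_mp) (simp add: MOST_I)
qed

lemma coeff_qd: "coeff (qd z p) k = coeff p (Suc k) * qn z (Suc k)"
  by (simp add: qd.rep_eq)

lemma poly_sumN: fixes p :: "real poly" assumes "degree p \<le> N" shows "poly p x = (\<Sum>i\<le>N. coeff p i * x^i)"
proof -
  have "poly p x = (\<Sum>i\<le>degree p. coeff p i * x^i)" by (rule poly_altdef)
  also have "\<dots> = (\<Sum>i\<le>N. coeff p i * x^i)"
    by (rule sum.mono_neutral_left) (use assms in \<open>auto simp: coeff_eq_0\<close>)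
  finally show ?thesis .
qed

lemma degree_qd: "degree (qd z p) \<le> degree p"
  by (rule degree_le) (auto simp: coeff_qd coeff_eq_0)

lemma qd_eval: assumes "z \<noteq> 1"
  shows "poly (qd z p) x * ((1 - z) * x) = poly p x - poly p (z*x)"
proof -
  define N where "N = degree p"
  have "poly (qd z p) x * ((1 - z) * x) = (\<Sum>k\<le>N. coeff p (Suc k) * qn z (Suc k) * x^k) * ((1-z)*x)"
    using poly_sumN[of "qd z p" N x] degree_qd[of z p] by (simp add: N_def coeff_qd)
  also have "\<dots> = (\<Sum>k\<le>N. coeff p (Suc k) * (1 - z^Suc k) * x^Suc k)"
    unfolding sum_distrib_right using assms by (intro sum.cong) (auto simp: qn_def field_simps)
  also have "\<dots> = (\<Sum>i\<le>Suc N. coeff p i * (1 - z^i) * x^i)"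
    by (subst sum.atMost_Suc_shift) simp
  also have "\<dots> = (\<Sum>i\<le>Suc N. coeff p i * x^i - coeff p i * (z*x)^i)"
    by (intro sum.cong) (auto simp: algebra_simps power_mult_distrib)
  also have "\<dots> = (\<Sum>i\<le>Suc N. coeff p i * x^i) - (\<Sum>i\<le>Suc N. coeff p i * (z*x)^i)"
    by (rule sum_subtractf)
  also have "\<dots> = poly p x - poly p (z*x)"
    using poly_sumN[of p "Suc N"] by (simp add: N_def)
  finally show ?thesis .
qed

lemma qD_poly: assumes "z \<noteq> 1" shows "qD z (poly p) = poly (qd z p)"
proof
  fix x
  show "qD z (poly p) x = poly (qd z p) x"
  proof (cases "x = 0")
    case True
    have "deriv (poly p) 0 = poly (pderiv p) 0" by (rule DERIV_imp_deriv) (rule poly_DERIV)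
    also have "\<dots> = coeff p 1" by (simp add: poly_0_coeff_0 coeff_pderiv)
    also have "\<dots> = poly (qd z p) 0" using assms by (simp add: poly_0_coeff_0 coeff_qd qn_def)
    finally show ?thesis using True by (simp add: qD_def)
  next
    case False
    have "(1 - z) * x \<noteq> 0" using assms False by simp
    then show ?thesis using qd_eval[OF assms, of p x] False
      by (simp add: qD_def field_simps)
  qed
qed

definition Lop :: "real \<Rightarrow> real \<Rightarrow> real \<Rightarrow> real \<Rightarrow> real \<Rightarrow> real poly \<Rightarrow> real poly" where
  "Lop q s a t1 t0 p = [:0, -s*a, s:] * qd (inverse q) (qd q p) + [:t0, t1:] * qd q p"

definition muf :: "real \<Rightarrow> real \<Rightarrow> real \<Rightarrow> nat \<Rightarrow> real" where
  "muf q s t1 k = qn q k * (t1 + s * qn (inverse q) (k - 1))"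

definition nuf :: "real \<Rightarrow> real \<Rightarrow> real \<Rightarrow> real \<Rightarrow> nat \<Rightarrow> real" where
  "nuf q s a t0 k = qn q k * (t0 - s * a * qn (inverse q) (k - 1))"

lemma qn_0[simp]: "qn z 0 = 0" by (simp add: qn_def)
lemma qn_1[simp]: "z \<noteq> 1 \<Longrightarrow> qn z 1 = 1" by (simp add: qn_def)

lemma coeff_Lop: assumes "q \<noteq> 1"
  shows "coeff (Lop q s a t1 t0 p) k = muf q s t1 k * coeff p k + nuf q s a t0 (Suc k) * coeff p (Suc k)"
proof -
  consider "k = 0" | "k = 1" | j where "k = Suc (Suc j)" by (metis One_nat_def not0_implies_Suc)
  then show ?thesis
  proof cases
    case 1 then show ?thesis using assms
      by (simp add: Lop_def coeff_qd muf_def nuf_def mult_pCons_left)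
  next
    case 2 then show ?thesis using assms
      by (simp add: Lop_def coeff_qd muf_def nuf_def mult_pCons_left algebra_simps)
  next
    case 3 then show ?thesis using assms
      by (simp add: Lop_def coeff_qd muf_def nuf_def mult_pCons_left algebra_simps numeral_2_eq_2)
  qed
qed

primrec ev :: "(nat \<Rightarrow> real) \<Rightarrow> (nat \<Rightarrow> real) \<Rightarrow> nat \<Rightarrow> nat \<Rightarrow> real" where
  "ev mu nu n 0 = 1"
| "ev mu nu n (Suc i) = nu (n - i) * ev mu nu n i / (mu n - mu (n - Suc i))"

lift_definition Pe :: "(nat \<Rightarrow> real) \<Rightarrow> (nat \<Rightarrow> real) \<Rightarrow> nat \<Rightarrow> real poly"
  is "\<lambda>mu nu n k. if k \<le> n then ev mu nu n (n - k) else 0"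
proof -
  fix mu nu :: "nat \<Rightarrow> real" and n :: nat
  show "\<forall>\<^sub>\<infinity> k. (if k \<le> n then ev mu nu n (n - k) else 0) = 0"
    unfolding MOST_nat by (rule exI[of _ n]) auto
qed

lemma coeff_Pe: "coeff (Pe mu nu n) k = (if k \<le> n then ev mu nu n (n - k) else 0)"
  by (simp add: Pe.rep_eq)

lemma degree_Pe: "degree (Pe mu nu n) = n"
proof (rule order_antisym)
  show "degree (Pe mu nu n) \<le> n" by (rule degree_le) (simp add: coeff_Pe)
  show "n \<le> degree (Pe mu nu n)" by (rule le_degree) (simp add: coeff_Pe)
qed

lemma Pe_eigen:
  assumes L: "\<And>p k. coeff (L p) k = mu k * coeff p k + nu (Suc k) * coeff p (Suc k)"
    and inj: "inj mu"
  shows "L (Pe mu nu n) = smult (mu n) (Pe mu nu n)"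
proof (rule poly_eqI)
  fix k
  show "coeff (L (Pe mu nu n)) k = coeff (smult (mu n) (Pe mu nu n)) k"
  proof (cases "k < n")
    case True
    define i where "i = n - Suc k"
    have ni: "n - k = Suc i" "n - i = Suc k" "n - Suc i = k" "n - Suc k = i" using True by (auto simp: i_def)
    have ne: "mu n - mu k \<noteq> 0" using inj True by (auto dest: injD)
    have "coeff (Pe mu nu n) k = nu (Suc k) * coeff (Pe mu nu n) (Suc k) / (mu n - mu k)"
      using True ni by (simp add: coeff_Pe)
    then have "coeff (Pe mu nu n) k * (mu n - mu k) = nu (Suc k) * coeff (Pe mu nu n) (Suc k)"
      using ne by simp
    then show ?thesis by (simp add: L algebra_simps)
  next
    case False
    then show ?thesis by (auto simp: L coeff_Pe)
  qed
qed




lemma Q_facts: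
  fixes q r :: real assumes q: "0 < q" "q < 1" and r: "0 \<le> r" "r < 1"
  shows "convergent_prod (\<lambda>k. 1 - r * q^k)" "0 < qpoch_inf r q" "qpoch_inf r q \<le> 1"
    "qpoch_inf r q = (1 - r) * qpoch_inf (r*q) q"
proof -
  have rq: "r * q^k < 1" for k
  proof -
    have "r * q^k \<le> r * 1" using q r by (intro mult_left_mono power_le_one) auto
    then show ?thesis using r by simp
  qed
  have rq0: "0 \<le> r * q^k" for k using q r by simp
  have "convergent_prod (\<lambda>k. 1 + (- (r * q^k)))"
  proof (rule summable_imp_convergent_prod_real)
    show "summable (\<lambda>k. \<bar>- (r * q ^ k)\<bar>)"
      using q r by (simp add: abs_mult summable_geometric)
    show "- (r * q ^ k) \<noteq> - 1" for k using rq[of k] by simp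
  qed
  then show cp: "convergent_prod (\<lambda>k. 1 - r * q^k)" by simp
  have lim: "(\<lambda>n. \<Prod>i\<le>n. 1 - r * q^i) \<longlonglongrightarrow> qpoch_inf r q"
    unfolding qpoch_inf_def by (rule convergent_prod_LIMSEQ[OF cp])
  have f0: "\<And>i. 0 \<le> 1 - r*q^i" using rq by (simp add: less_imp_le)
  have f1: "\<And>i. 1 - r*q^i \<le> 1" using rq0 by simp
  have p0: "\<forall>n\<ge>0. 0 \<le> (\<Prod>i\<le>n. 1 - r * q^i)" using f0 by (simp add: prod_nonneg)
  have p1: "\<forall>n\<ge>0. (\<Prod>i\<le>n. 1 - r * q^i) \<le> 1" using f0 f1 by (simp add: prod_le_1)
  have "0 \<le> qpoch_inf r q"
    by (rule LIMSEQ_le_const[OF lim]) (use p0 in blast)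
  moreover have "qpoch_inf r q \<noteq> 0"
    unfolding qpoch_inf_def by (rule prodinf_nonzero[OF cp]) (use rq in \<open>auto simp: less_imp_neq\<close>)
  ultimately show "0 < qpoch_inf r q" by simp
  show "qpoch_inf r q \<le> 1"
    by (rule LIMSEQ_le_const2[OF lim]) (use p1 in blast)
  have "(\<Prod>n. 1 - r * q ^ Suc n) = qpoch_inf r q / (1 - r * q^0)"
    unfolding qpoch_inf_def by (rule prodinf_split_head[OF cp]) (use r in simp)
  moreover have "(\<Prod>n. 1 - r * q ^ Suc n) = qpoch_inf (r*q) q"
    unfolding qpoch_inf_def by (simp add: mult.assoc)
  ultimately have e: "qpoch_inf r q / (1 - r) = qpoch_inf (r*q) q" by simp
  have "1 - r \<noteq> 0" using r by simp
  then show "qpoch_inf r q = (1 - r) * qpoch_inf (r*q) q" by (simp add: e[symmetric])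
qed

locale setting =
  fixes q s a t0 c :: real
  assumes q0: "0 < q" and q1: "q < 1" and s: "s \<noteq> 0" and a: "a > 0" and c0: "c > 0"
    and qc: "q * c < 1"
    and crel: "c * s * a * q^2 = - (q * ((1 - inverse q) * t0 - s * a))"
begin

definition "t1 = s * q / (1 - q)"
definition "x j = q^j * a"
definition "Q j = qpoch_inf (q ^ Suc j) q"
definition "W j = q^j * c^j * Q j"
definition "beta = q * ((1 - inverse q) * t0 - s * a) / (1 - q)"
definition "gam y = s * q * (y - a) / (1 - q)"
abbreviation "L \<equiv> Lop q s a t1 t0"

lemma qS: "0 \<le> q ^ Suc j" "q ^ Suc j < 1" using q0 power_Suc_less_one[OF q0 q1, of j] by simp_all

lemma Q_pos: "0 < Q j" and Q_le1: "Q j \<le> 1" and Q_Suc: "Q j = (1 - q ^ Suc j) * Q (Suc j)"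
  using Q_facts[OF q0 q1 qS] by (simp_all add: Q_def mult.commute)

lemma W_pos: "0 < W j" using Q_pos q0 c0 by (simp add: W_def)

lemma W_bound: "W j \<le> (q * c)^j"
proof -
  have "W j \<le> q^j * c^j * 1" unfolding W_def using Q_le1 q0 c0 by (intro mult_left_mono) auto
  then show ?thesis by (simp add: power_mult_distrib)
qed

lemma x_ne0: "x j \<noteq> 0" using q0 a by (simp add: x_def)
lemma x_Suc: "x (Suc j) = q * x j" by (simp add: x_def)
lemma x_lim: "x \<longlonglongrightarrow> 0"
proof -
  have "(\<lambda>j. q^j * a) \<longlonglongrightarrow> 0 * a" using q0 q1 by (intro tendsto_intros) simp
  then show ?thesis by (simp add: x_def[abs_def])
qed

lemma summ: assumes "u \<longlonglongrightarrow> l" shows "summable (\<lambda>j. W j * u j)"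
proof -
  have "Bseq u" using assms by (intro convergent_imp_Bseq convergentI)
  then obtain K where K: "0 < K" "\<And>n. norm (u n) \<le> K" by (auto elim: BseqE)
  show ?thesis
  proof (rule summable_comparison_test')
    show "summable (\<lambda>j. K * (q*c)^j)" using q0 c0 qc by (intro summable_mult summable_geometric) simp
    fix n :: nat assume "n \<ge> 0"
    have "norm (W n * u n) = W n * norm (u n)" using W_pos[of n] by (simp add: abs_mult)
    also have "\<dots> \<le> (q*c)^n * K" using W_pos[of n] W_bound[of n] K
      by (intro mult_mono) auto
    finally show "norm (W n * u n) \<le> K * (q*c)^n" by (simp add: mult.commute)
  qed
qed

lemma Lop_eval: assumes y: "y \<noteq> 0"
  shows "poly (L p) y = - beta * poly (qd q p) y + gam y * poly (qd q p) (y / q)"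
proof -
  have iq: "inverse q \<noteq> 1" using q1 by auto
  have h: "poly (qd (inverse q) (qd q p)) y * ((1 - inverse q) * y) = poly (qd q p) y - poly (qd q p) (inverse q * y)"
    by (rule qd_eval[OF iq])
  have ne: "(1 - inverse q) * y \<noteq> 0" using iq y by simp
  have e: "poly (qd (inverse q) (qd q p)) y = (poly (qd q p) y - poly (qd q p) (y / q)) / ((1 - inverse q) * y)"
    using h ne by (simp add: field_simps)
  have "poly (L p) y = y * (- s * a + y * s) * poly (qd (inverse q) (qd q p)) y + (t0 + y * t1) * poly (qd q p) y"
    by (simp add: Lop_def algebra_simps)
  also have "\<dots> = - s*q*(y-a)*(poly (qd q p) y - poly (qd q p) (y / q))/(1-q) + (t0 + y * t1) * poly (qd q p) y"
    unfolding e using q0 q1 y by (simp add: field_simps)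
  also have "\<dots> = - beta * poly (qd q p) y + gam y * poly (qd q p) (y / q)"
  proof -
    have nq: "1 - q \<noteq> 0" using q1 by simp
    have ba: "beta = ((q - 1) * t0 - s * a * q) / (1 - q)" unfolding beta_def using q0 nq by (simp add: field_simps)
    show ?thesis unfolding t1_def ba gam_def using nq by (simp add: field_simps)
  qed
  finally show ?thesis .
qed

lemma W_gam: "W (Suc j) * gam (x (Suc j)) = beta * W j"
proof -
  have "W (Suc j) * gam (x (Suc j)) = - (q^j * c^j * ((1 - q ^ Suc j) * Q (Suc j))) * (c * s * a * q^2) / (1 - q)"
    by (simp add: W_def gam_def x_def field_simps power2_eq_square)
  also have "\<dots> = beta * W j"
    unfolding crel Q_Suc[symmetric] by (simp add: beta_def W_def)
  finally show ?thesis .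
qed


lemma x_inj: "inj x"
proof (rule injI)
  fix m n assume "x m = x n"
  then have "q^m = q^n" using a by (simp add: x_def)
  then show "m = n"
    using power_strict_decreasing_iff[OF q0 q1, of m n] power_strict_decreasing_iff[OF q0 q1, of n m]
    by (cases m n rule: linorder_cases) auto
qed

definition "Bf f g = (\<Sum>j. W j * (x j * poly (qd q g) (x j) * poly (qd q f) (x j)))"

lemma ident:
  "(\<lambda>j. W j * (poly g (x j) * poly (L f) (x j))) sums (- beta * (1 - q) * Bf f g)"
proof -
  define T1 where "T1 j = W j * (poly g (x j) * (- beta * poly (qd q f) (x j)))" for j
  define T2 where "T2 j = W j * (poly g (x j) * (gam (x j) * poly (qd q f) (x j / q)))" for j
  define T3 where "T3 j = W j * (- beta * (1 - q) * (x j * poly (qd q g) (x j) * poly (qd q f) (x j)))" for j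
  define B3 where "B3 = - beta * (1 - q) * Bf f g"
  have split: "W j * (poly g (x j) * poly (L f) (x j)) = T1 j + T2 j" for j
    by (subst Lop_eval[OF x_ne0]) (simp add: T1_def T2_def algebra_simps)
  have T20: "T2 0 = 0" by (simp add: T2_def gam_def x_def)
  have gS: "poly g (x (Suc j)) = poly g (x j) - (1 - q) * x j * poly (qd q g) (x j)" for j
    using qd_eval[of q g "x j"] q1 by (simp add: x_Suc algebra_simps)
  have xq: "x (Suc j) / q = x j" for j using q0 by (simp add: x_Suc)
  have T2S: "T2 (Suc j) = T3 j - T1 j" for j
  proof -
    have "T2 (Suc j) = (W (Suc j) * gam (x (Suc j))) * poly g (x (Suc j)) * poly (qd q f) (x j)"
      by (simp add: T2_def xq)
    also have "\<dots> = beta * W j * (poly g (x j) - (1-q) * x j * poly (qd q g) (x j)) * poly (qd q f) (x j)"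
      by (simp add: W_gam gS)
    also have "\<dots> = T3 j - T1 j" by (simp add: T1_def T3_def algebra_simps)
    finally show ?thesis .
  qed
  have "(\<lambda>j. poly g (x j) * (- beta * poly (qd q f) (x j))) \<longlonglongrightarrow> poly g 0 * (- beta * poly (qd q f) 0)"
    by (intro tendsto_mult tendsto_const tendsto_poly x_lim)
  then have s1: "summable T1" unfolding T1_def by (rule summ)
  have s3': "summable (\<lambda>j. W j * (x j * poly (qd q g) (x j) * poly (qd q f) (x j)))"
    by (rule summ[of _ "0 * poly (qd q g) 0 * poly (qd q f) 0"]) (intro tendsto_mult tendsto_poly x_lim)
  have "(\<lambda>j. (- beta * (1 - q)) * (W j * (x j * poly (qd q g) (x j) * poly (qd q f) (x j)))) sums B3"
    unfolding B3_def Bf_def by (rule sums_mult[OF summable_sums[OF s3']])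
  moreover have "(\<lambda>j. (- beta * (1 - q)) * (W j * (x j * poly (qd q g) (x j) * poly (qd q f) (x j)))) = T3"
    by (rule ext) (simp add: T3_def algebra_simps)
  ultimately have S3: "T3 sums B3" by simp
  have "(\<lambda>j. T3 j - T1 j) sums (B3 - suminf T1)" by (rule sums_diff[OF S3 summable_sums[OF s1]])
  then have "(\<lambda>j. T2 (Suc j)) sums (B3 - suminf T1)" by (simp add: T2S)
  then have "T2 sums (B3 - suminf T1)" by (simp add: sums_Suc_iff T20)
  then have "(\<lambda>j. T1 j + T2 j) sums (suminf T1 + (B3 - suminf T1))"
    by (rule sums_add[OF summable_sums[OF s1]])
  then show ?thesis by (simp add: split B3_def)
qed

definition "mu = muf q s t1"
definition "nu = nuf q s a t0"
definition "P n = Pe mu nu n"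

lemma mu_closed: "mu k = s * q^2 * (1 - q^k) / ((1 - q)^2 * q^k)"
proof (cases k)
  case 0 then show ?thesis by (simp add: mu_def muf_def)
next
  case (Suc j)
  have nq: "1 - q \<noteq> 0" "q \<noteq> 0" "1 - inverse q \<noteq> 0" using q0 q1 by auto
  have pj: "inverse q ^ j = 1 / q^j" by (simp add: power_inverse divide_inverse)
  have nq2: "q - 1 \<noteq> 0" "q^j \<noteq> 0" using q0 q1 by auto
  have i: "1 - inverse q = (q-1)/q" using nq by (simp add: field_simps)
  have h1: "s * ((1 - inverse q ^ j)/(1 - inverse q)) = s*q*(q^j - 1)/((q-1)*q^j)"
    unfolding i pj using nq nq2 by (simp add: field_simps)
  have h2: "s * q / (1 - q) + s*q*(q^j - 1)/((q-1)*q^j) = s * q / ((1 - q) * q^j)"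
    using nq nq2 by (simp add: field_simps)
  have "mu k = (1 - q^Suc j)/(1-q) * (s * q / (1 - q) + s * ((1 - inverse q ^ j)/(1 - inverse q)))"
    unfolding Suc mu_def muf_def qn_def t1_def by (simp add: mult.commute)
  also have "\<dots> = (1 - q^Suc j)/(1-q) * (s * q / ((1 - q) * q^j))" unfolding h1 h2 ..
  also have "\<dots> = s * q^2 * (1 - q^k) / ((1 - q)^2 * q^k)"
  proof -
    have g: "\<And>w v. w \<noteq> 0 \<Longrightarrow> v \<noteq> 0 \<Longrightarrow> (1 - q * v)/w * (s*q/(w * v)) = s*q^2*(1-q * v)/(w^2*(q * v))"
      using nq by (simp add: field_simps power2_eq_square)
    show ?thesis unfolding Suc power_Suc using g[OF nq(1) nq2(2)] by simp
  qed
  finally show ?thesis .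
qed

lemma pow_inj: "q^m = q^n \<Longrightarrow> m = n"
  using power_strict_decreasing_iff[OF q0 q1, of m n] power_strict_decreasing_iff[OF q0 q1, of n m]
  by (cases m n rule: linorder_cases) auto

lemma mu_inj: "inj mu"
proof (rule injI)
  fix m n assume e: "mu m = mu n"
  have k: "s * q^2 / (1 - q)^2 \<noteq> 0" using s q0 q1 by simp
  have "mu k = s * q^2 / (1 - q)^2 * (1 / q^k - 1)" for k
    unfolding mu_closed using q0 by (simp add: field_simps)
  then have "1 / q^m - 1 = 1 / q^n - 1" using e k by simp
  then have "q^m = q^n" by simp
  then show "m = n" by (rule pow_inj)
qed

lemma P_eigen: "L (P n) = smult (mu n) (P n)"
  unfolding P_def
  by (rule Pe_eigen[OF _ mu_inj]) (use q1 in \<open>simp add: coeff_Lop mu_def nu_def\<close>)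

lemma coeff_P_n: "coeff (P n) n = 1" by (simp add: P_def coeff_Pe)
lemma degree_P: "degree (P n) = n" by (simp add: P_def degree_Pe)

lemma P_qEHT: "qEHT q (\<lambda>x. s * x * (x - a)) (\<lambda>x. t1 * x + t0) (- mu n) (poly (P n))"
proof -
  have iq: "inverse q \<noteq> 1" "q \<noteq> 1" using q1 by auto
  have "poly (L (P n)) y = mu n * poly (P n) y" for y by (simp add: P_eigen)
  then show ?thesis unfolding qEHT_def qD_poly[OF iq(2)] qD_poly[OF iq(1)]
    by (simp add: Lop_def algebra_simps)
qed

definition "S n m = (\<Sum>j. W j * (poly (P n) (x j) * poly (P m) (x j)))"

lemma summP: "summable (\<lambda>j. W j * (poly (P n) (x j) * poly (P m) (x j)))"
  by (rule summ) (auto intro!: tendsto_intros x_lim)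

lemma muS: "mu n * S m n = - beta * (1 - q) * Bf (P n) (P m)"
proof -
  have "(\<lambda>j. W j * (poly (P m) (x j) * poly (L (P n)) (x j))) sums (- beta * (1 - q) * Bf (P n) (P m))"
    by (rule ident)
  moreover have "(\<lambda>j. W j * (poly (P m) (x j) * poly (L (P n)) (x j))) = (\<lambda>j. mu n * (W j * (poly (P m) (x j) * poly (P n) (x j))))"
    by (rule ext) (simp add: P_eigen algebra_simps)
  moreover have "(\<lambda>j. mu n * (W j * (poly (P m) (x j) * poly (P n) (x j)))) sums (mu n * S m n)"
    unfolding S_def by (rule sums_mult[OF summable_sums[OF summP]])
  ultimately show ?thesis using sums_unique2 by metis
qed

lemma S_sym: "S n m = S m n" unfolding S_def by (simp add: mult.commute)
lemma Bf_sym: "Bf f g = Bf g f" unfolding Bf_def by (simp add: mult_ac)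

lemma orth: assumes "n \<noteq> m" shows "S n m = 0"
proof -
  have "mu n * S m n = mu m * S n m" using muS[of n m] muS[of m n] Bf_sym by simp
  then have "(mu n - mu m) * S n m = 0" using S_sym[of n m] by (simp add: algebra_simps)
  moreover have "mu n \<noteq> mu m" using mu_inj assms by (auto dest: injD)
  ultimately show ?thesis by simp
qed

lemma pos: "0 < S n n"
proof -
  have nz: "P n \<noteq> 0" using coeff_P_n[of n] by auto
  have "\<exists>j. poly (P n) (x j) \<noteq> 0"
  proof (rule ccontr)
    assume "\<not> ?thesis"
    then have "range x \<subseteq> {y. poly (P n) y = 0}" by auto
    then have "finite (range x)" using poly_roots_finite[OF nz] finite_subset by blast
    then show False using range_inj_infinite[OF x_inj] by simp
  qed
  then obtain j where j: "poly (P n) (x j) \<noteq> 0" by blast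
  show ?thesis unfolding S_def
  proof (rule suminf_pos2[OF summP])
    show "0 \<le> W i * (poly (P n) (x i) * poly (P n) (x i))" for i using W_pos[of i] by (simp add: less_imp_le)
    have "0 < poly (P n) (x j) * poly (P n) (x j)" using j not_real_square_gt_zero by blast
    then show "0 < W j * (poly (P n) (x j) * poly (P n) (x j))" using W_pos[of j] by (rule mult_pos_pos[rotated])
  qed
qed

end




theorem theorem5p18:
  fixes q s a1 t0 t1 b :: real and \<alpha> :: complex
    and \<sigma>1 \<tau> :: "real \<Rightarrow> real"
  assumes q: "0 < q" "q < 1"
    and s: "s \<noteq> 0"
    and a1: "a1 > 0"
    and \<sigma>1_def: "\<sigma>1 = (\<lambda>x. s * x * (x - a1))"
    and \<tau>_def: "\<tau> = (\<lambda>x. t1 * x + t0)"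
    and t1: "t1 \<noteq> 0"
    and ratio: "t1 / s = - 1 / (1 - inverse q)"
    and \<sigma>2': "q * ((1 - inverse q) * t0 - s * a1) \<noteq> 0"
    and y0: "0 < q * (inverse q * (1 - (1 - inverse q) / a1 * (t0 / s)))"
            "q * (inverse q * (1 - (1 - inverse q) / a1 * (t0 / s))) < 1"
    and b: "b = a1"
    and \<alpha>: "exp (\<alpha> * complex_of_real (ln q)) =
            complex_of_real (- (inverse q ^ 2 * (q * ((1 - inverse q) * t0 - s * a1))) / (s * b))"
  shows "\<exists>(P :: nat \<Rightarrow> real poly) (d :: nat \<Rightarrow> complex).
           (\<forall>n. degree (P n) = n \<and>
                qEHT q \<sigma>1 \<tau> (- qnum q (int n) * (t1 + qnum (inverse q) (int n - 1) * s))
                     (poly (P n))) \<and>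
           (\<forall>n. d n \<noteq> 0) \<and>
           (\<forall>m n. has_qint q
                  (\<lambda>x. complex_of_real (poly (P n) x * poly (P m) x) *
                       (exp (\<alpha> * complex_of_real (ln \<bar>x\<bar>)) *
                        complex_of_real (qpoch_inf (q * x / b) q)))
                  b (if m = n then d n else 0))"
proof -
  define c where "c = - (inverse q ^ 2 * (q * ((1 - inverse q) * t0 - s * a1))) / (s * b)"
  have nq: "q \<noteq> 0" "1 - q \<noteq> 0" "a1 \<noteq> 0" using q a1 by auto
  have qc: "q * c = q * (inverse q * (1 - (1 - inverse q) / a1 * (t0 / s)))"
    unfolding c_def b using nq s by (simp add: field_simps power2_eq_square)
  have c0: "c > 0" using y0(1) q unfolding qc[symmetric] by (simp add: zero_less_mult_iff)
  have crel: "c * s * a1 * q^2 = - (q * ((1 - inverse q) * t0 - s * a1))"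
    unfolding c_def b using nq s by (simp add: field_simps power2_eq_square)
  interpret st: setting q s a1 t0 c
    by unfold_locales (use q s a1 c0 y0 crel qc in auto)
  have t1e: "t1 = st.t1"
  proof -
    have "t1 = s * (- 1 / (1 - inverse q))" using ratio s by (simp add: field_simps)
    also have "\<dots> = s * q / (1 - q)" using nq by (simp add: field_simps)
    finally show ?thesis by (simp add: st.t1_def)
  qed
  have lam: "- qnum q (int n) * (t1 + qnum (inverse q) (int n - 1) * s) = - st.mu n" for n
  proof (cases n)
    case 0 then show ?thesis by (simp add: qnum_def st.mu_def muf_def)
  next
    case (Suc j)
    have e1: "int n - 1 = int j" using Suc by simp
    have e2: "qnum z (int k) = qn z k" for z k by (simp add: qnum_def qn_def)
    show ?thesis unfolding e1 e2 using Suc by (simp add: st.mu_def muf_def t1e mult.commute)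
  qed
  define K where "K = exp (\<alpha> * complex_of_real (ln b))"
  define d where "d n = complex_of_real ((1 - q) * b) * K * complex_of_real (st.S n n)" for n
  have b0: "b > 0" using a1 b by simp
  have trm: "complex_of_real ((1 - q) * b * q ^ j) *
       (complex_of_real (poly (st.P n) (q ^ j * b) * poly (st.P m) (q ^ j * b)) *
        (exp (\<alpha> * complex_of_real (ln \<bar>q ^ j * b\<bar>)) *
         complex_of_real (qpoch_inf (q * (q ^ j * b) / b) q)))
     = complex_of_real ((1 - q) * b) * K *
       complex_of_real (st.W j * (poly (st.P n) (st.x j) * poly (st.P m) (st.x j)))" for n m j
  proof -
    have l: "ln \<bar>q ^ j * b\<bar> = of_nat j * ln q + ln b"
      using q b0 by (simp add: ln_mult ln_realpow abs_mult)
    have e: "exp (\<alpha> * complex_of_real (ln \<bar>q ^ j * b\<bar>)) = complex_of_real c ^ j * K"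
    proof -
      have "exp (\<alpha> * complex_of_real (ln \<bar>q ^ j * b\<bar>)) = exp (of_nat j * (\<alpha> * complex_of_real (ln q))) * K"
        unfolding l K_def by (simp add: exp_add[symmetric] algebra_simps)
      also have "\<dots> = complex_of_real c ^ j * K" by (simp add: exp_of_nat_mult \<alpha> c_def)
      finally show ?thesis .
    qed
    have qq: "q * (q ^ j * b) / b = q ^ Suc j" using b0 by simp
    show ?thesis unfolding e qq using b
      by (simp add: st.W_def st.Q_def st.x_def mult_ac)
  qed
  show ?thesis
  proof (intro exI conjI allI)
    fix n
    show "degree (st.P n) = n" by (rule st.degree_P)
    show "qEHT q \<sigma>1 \<tau> (- qnum q (int n) * (t1 + qnum (inverse q) (int n - 1) * s)) (poly (st.P n))"
      unfolding lam unfolding \<sigma>1_def \<tau>_def t1e by (rule st.P_qEHT)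
    show "d n \<noteq> 0" using st.pos[of n] q b0 by (simp add: d_def K_def)
  next
    fix m n
    have "(\<lambda>j. st.W j * (poly (st.P n) (st.x j) * poly (st.P m) (st.x j))) sums st.S n m"
      unfolding st.S_def by (rule summable_sums[OF st.summP])
    then have "(\<lambda>j. complex_of_real (st.W j * (poly (st.P n) (st.x j) * poly (st.P m) (st.x j)))) sums complex_of_real (st.S n m)"
      by (simp only: sums_of_real_iff)
    then have "(\<lambda>j. complex_of_real ((1 - q) * b) * K * complex_of_real (st.W j * (poly (st.P n) (st.x j) * poly (st.P m) (st.x j))))
        sums (complex_of_real ((1 - q) * b) * K * complex_of_real (st.S n m))"
      by (rule sums_mult)
    moreover have "complex_of_real ((1 - q) * b) * K * complex_of_real (st.S n m) = (if m = n then d n else 0)"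
      using st.orth[of n m] by (auto simp: d_def)
    ultimately show "has_qint q
                  (\<lambda>x. complex_of_real (poly (st.P n) x * poly (st.P m) x) *
                       (exp (\<alpha> * complex_of_real (ln \<bar>x\<bar>)) *
                        complex_of_real (qpoch_inf (q * x / b) q)))
                  b (if m = n then d n else 0)"
      unfolding has_qint_def trm by simp
  qed
qed


end
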